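(* Let $P$ be a path with red edge costs in $\{a,b\}$, $0\le a<b$, and let $\sigma$ be the number of bad $a$-blocks of $P$. Let $r^*$ be the optimal revenue of $\mathsf{StackMST}(0,0)$ with red tree $P$. Then $$r^*\le c(P)-\min\left\{\sigma a,\ \left\lfloor\frac{\sigma}{2}\right\rfloor(b-a)+\left(\sigma-2\left\lfloor\frac{\sigma}{2}\right\rfloor\right)\min\{a,b-a\}\right\}.$$
   Context: Budgeted Stackelberg MST game $\mathsf{StackMST}(\gamma,\Delta)$: we are given a tree $T=(V,E(T))$ whose (red) edges have fixed costs $c(e)\ge 0$, a non-negative activation cost $\gamma(e)$ for every pair $e\notin E(T)$ of vertices, and a budget $\Delta$. The leader selects a set $F$ of pairs not in $E(T)$ with $\sum_{e\in F}\gamma(e)\le\Delta$ and prices $p:F\to\mathbb{R}^+$; the follower computes a minimum spanning tree $M$ of $(V,E(T)\cup F)$ (weights $c$ on red edges, $p$ on $F$), breaking ties in favor of the leader's revenue $\sum_{e\in F\cap M}p(e)$, which the leader maximizes. $\mathsf{StackMST}(0,0)$ is the case $\gamma\equiv0,\Delta=0$ (any new edges may be added freely). For the red path $P$: $c(P)$ is the total cost of its edges; an $a$-block is an inclusion-maximal subpath of $P$ all of whose edges have cost $a$; an $a$-block is good if it has at least 3 edges and bad otherwise. *)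

theory Defs
  imports Complex_Main
begin

text \<open>The red path P has vertices 0,...,n and red edges {i, i+1} for i < n,
  the edge {i, i+1} having cost c i. Edges are 2-element vertex sets.\<close>

definition path_vertices :: "nat \<Rightarrow> nat set" where
  "path_vertices n = {0..n}"

definition path_edges :: "nat \<Rightarrow> nat set set" where
  "path_edges n = {{i, Suc i} | i. i < n}"

definition nonpath_pairs :: "nat \<Rightarrow> nat set set" where
  "nonpath_pairs n = {{u, v} | u v. u \<le> n \<and> v \<le> n \<and> u \<noteq> v} - path_edges n"

definition path_cost :: "nat \<Rightarrow> (nat \<Rightarrow> real) \<Rightarrow> real" where
  "path_cost n c = (\<Sum>i<n. c i)"

definition connects :: "nat set \<Rightarrow> nat set set \<Rightarrow> bool" where
  "connects V M \<longleftrightarrow> (\<forall>u\<in>V. \<forall>v\<in>V. (u, v) \<in> {(x, y). {x, y} \<in> M}\<^sup>*)"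

definition spanning_tree :: "nat set \<Rightarrow> nat set set \<Rightarrow> nat set set \<Rightarrow> bool" where
  "spanning_tree V E M \<longleftrightarrow> M \<subseteq> E \<and> connects V M \<and> card M = card V - 1"

definition edge_weight :: "nat \<Rightarrow> (nat \<Rightarrow> real) \<Rightarrow> (nat set \<Rightarrow> real) \<Rightarrow> nat set \<Rightarrow> real" where
  "edge_weight n c p e = (if e \<in> path_edges n then c (THE i. i < n \<and> e = {i, Suc i}) else p e)"

definition tree_weight :: "nat \<Rightarrow> (nat \<Rightarrow> real) \<Rightarrow> (nat set \<Rightarrow> real) \<Rightarrow> nat set set \<Rightarrow> real" where
  "tree_weight n c p M = (\<Sum>e\<in>M. edge_weight n c p e)"

definition is_mst :: "nat \<Rightarrow> (nat \<Rightarrow> real) \<Rightarrow> nat set set \<Rightarrow> (nat set \<Rightarrow> real) \<Rightarrow> nat set set \<Rightarrow> bool" where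
  "is_mst n c F p M \<longleftrightarrow>
     spanning_tree (path_vertices n) (path_edges n \<union> F) M \<and>
     (\<forall>M'. spanning_tree (path_vertices n) (path_edges n \<union> F) M' \<longrightarrow>
        tree_weight n c p M \<le> tree_weight n c p M')"

definition revenue :: "nat set set \<Rightarrow> (nat set \<Rightarrow> real) \<Rightarrow> nat set set \<Rightarrow> real" where
  "revenue F p M = (\<Sum>e\<in>F \<inter> M. p e)"

definition follower_choice :: "nat \<Rightarrow> (nat \<Rightarrow> real) \<Rightarrow> nat set set \<Rightarrow> (nat set \<Rightarrow> real) \<Rightarrow> nat set set \<Rightarrow> bool" where
  "follower_choice n c F p M \<longleftrightarrow>
     is_mst n c F p M \<and> (\<forall>M'. is_mst n c F p M' \<longrightarrow> revenue F p M' \<le> revenue F p M)"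

text \<open>a-blocks: inclusion-maximal runs of consecutive red edges i..j (edge indices) of cost a.\<close>
definition a_blocks :: "nat \<Rightarrow> (nat \<Rightarrow> real) \<Rightarrow> real \<Rightarrow> (nat \<times> nat) set" where
  "a_blocks n c a = {(i, j). i \<le> j \<and> j < n \<and> (\<forall>k\<in>{i..j}. c k = a) \<and>
       (i = 0 \<or> c (i - 1) \<noteq> a) \<and> (Suc j = n \<or> c (Suc j) \<noteq> a)}"

definition num_bad_blocks :: "nat \<Rightarrow> (nat \<Rightarrow> real) \<Rightarrow> real \<Rightarrow> nat" where
  "num_bad_blocks n c a = card {(i, j) \<in> a_blocks n c a. j - i + 1 < 3}"

end

theory Submission
  imports Defs
begin

definition erel :: "nat set set \<Rightarrow> (nat \<times> nat) set" where
  "erel E = {(x, y). {x, y} \<in> E}"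

abbreviation conn :: "nat set set \<Rightarrow> nat \<Rightarrow> nat \<Rightarrow> bool" where
  "conn E x y \<equiv> (x, y) \<in> (erel E)\<^sup>*"

definition cls :: "nat set \<Rightarrow> nat set set \<Rightarrow> nat \<Rightarrow> nat set" where
  "cls V E v = {u \<in> V. conn E v u}"

definition comps :: "nat set \<Rightarrow> nat set set \<Rightarrow> nat set set" where
  "comps V E = cls V E ` V"

definition ncomp :: "nat set \<Rightarrow> nat set set \<Rightarrow> nat" where
  "ncomp V E = card (comps V E)"

definition okE :: "nat set \<Rightarrow> nat set set \<Rightarrow> bool" where
  "okE V E \<longleftrightarrow> (\<forall>e\<in>E. \<exists>x y. e = {x, y} \<and> x \<in> V \<and> y \<in> V)"

lemma sym_erel: "sym (erel E)"
  unfolding erel_def sym_def by (auto simp: insert_commute)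

lemma conn_sym: "conn E x y \<Longrightarrow> conn E y x"
  using sym_rtrancl[OF sym_erel] unfolding sym_def by blast

lemma conn_trans: "conn E x y \<Longrightarrow> conn E y z \<Longrightarrow> conn E x z"
  by (rule rtrancl_trans)

lemma conn_edge: "{x, y} \<in> E \<Longrightarrow> conn E x y"
  unfolding erel_def by auto

lemma erel_mono: "E \<subseteq> E' \<Longrightarrow> erel E \<subseteq> erel E'"
  unfolding erel_def by auto

lemma conn_mono: "conn E x y \<Longrightarrow> E \<subseteq> E' \<Longrightarrow> conn E' x y"
  using rtrancl_mono[OF erel_mono] by blast

lemma erel_insert: "erel (insert {x, y} E) = insert (x, y) (insert (y, x) (erel E))"
  unfolding erel_def by (auto simp: doubleton_eq_iff)

lemma conn_insert:
  "conn (insert {x, y} E) u v \<longleftrightarrow>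
     conn E u v \<or> (conn E u x \<and> conn E y v) \<or> (conn E u y \<and> conn E x v)"
proof
  assume "conn (insert {x, y} E) u v"
  then show "conn E u v \<or> (conn E u x \<and> conn E y v) \<or> (conn E u y \<and> conn E x v)"
  proof (induction rule: rtrancl_induct)
    case base then show ?case by simp
  next
    case (step v w)
    from step(2) have st: "(v, w) = (x, y) \<or> (v, w) = (y, x) \<or> (v, w) \<in> erel E"
      by (simp add: erel_insert)
    have e: "conn E v w" if "(v, w) \<in> erel E" using that by simp
    from st show ?case
    proof (elim disjE)
      assume "(v, w) = (x, y)"
      then have "v = x" "w = y" by auto
      then show ?case using step(3) by (blast intro: conn_trans)
    next
      assume "(v, w) = (y, x)"
      then have "v = y" "w = x" by auto
      then show ?case using step(3) by (blast intro: conn_trans)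
    next
      assume "(v, w) \<in> erel E"
      then have "conn E v w" by simp
      then show ?case using step(3) by (blast intro: conn_trans)
    qed
  qed
next
  have sub: "erel E \<subseteq> erel (insert {x, y} E)" by (rule erel_mono) auto
  have xy: "conn (insert {x, y} E) x y" "conn (insert {x, y} E) y x"
    by (auto intro: conn_edge)
  assume "conn E u v \<or> (conn E u x \<and> conn E y v) \<or> (conn E u y \<and> conn E x v)"
  then show "conn (insert {x, y} E) u v"
    using rtrancl_mono[OF sub] xy by (meson conn_trans subsetD)
qed

lemma conn_insert_same:
  assumes "conn E x y"
  shows "conn (insert {x, y} E) u v \<longleftrightarrow> conn E u v"
  using assms by (meson conn_insert conn_sym conn_trans)

lemma cls_in: "v \<in> V \<Longrightarrow> v \<in> cls V E v"
  unfolding cls_def by auto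

lemma cls_eq: "conn E u v \<Longrightarrow> cls V E u = cls V E v"
  unfolding cls_def by (meson conn_sym conn_trans)

lemma cls_eq_iff: "u \<in> V \<Longrightarrow> v \<in> V \<Longrightarrow> cls V E u = cls V E v \<longleftrightarrow> conn E u v"
  unfolding cls_def by (auto dest: conn_sym)

lemma finite_comps: "finite V \<Longrightarrow> finite (comps V E)"
  unfolding comps_def by simp

lemma ncomp_insert_same:
  assumes "conn E x y"
  shows "comps V (insert {x, y} E) = comps V E"
  using conn_insert_same[OF assms] unfolding comps_def cls_def by simp

lemma comps_insert_new:
  assumes "\<not> conn E x y" "x \<in> V" "y \<in> V"
  shows "comps V (insert {x, y} E) =
           insert (cls V E x \<union> cls V E y) (comps V E - {cls V E x, cls V E y})"
proof -
  have c: "cls V (insert {x, y} E) v =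
     (if conn E v x \<or> conn E v y then cls V E x \<union> cls V E y else cls V E v)" if "v \<in> V" for v
  proof (cases "conn E v x")
    case True
    then have "\<not> conn E v y" using assms(1) by (meson conn_sym conn_trans)
    then show ?thesis using True unfolding cls_def conn_insert
      by (auto dest: conn_sym intro: conn_trans)
  next
    case False
    then show ?thesis unfolding cls_def conn_insert
      by (auto dest: conn_sym intro: conn_trans)
  qed
  show ?thesis
  proof (rule set_eqI)
    fix K
    show "K \<in> comps V (insert {x, y} E) \<longleftrightarrow>
          K \<in> insert (cls V E x \<union> cls V E y) (comps V E - {cls V E x, cls V E y})"
    proof
      assume "K \<in> comps V (insert {x, y} E)"
      then obtain v where v: "v \<in> V" "K = cls V (insert {x, y} E) v"
        unfolding comps_def by auto
      show "K \<in> insert (cls V E x \<union> cls V E y) (comps V E - {cls V E x, cls V E y})"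
      proof (cases "conn E v x \<or> conn E v y")
        case True then show ?thesis using c v by auto
      next
        case False
        then have "cls V E v \<noteq> cls V E x" "cls V E v \<noteq> cls V E y"
          using cls_eq_iff v assms by auto
        then show ?thesis using c v False unfolding comps_def by auto
      qed
    next
      assume K: "K \<in> insert (cls V E x \<union> cls V E y) (comps V E - {cls V E x, cls V E y})"
      show "K \<in> comps V (insert {x, y} E)"
      proof (cases "K = cls V E x \<union> cls V E y")
        case True
        then have "K = cls V (insert {x, y} E) x" using c assms by auto
        then show ?thesis unfolding comps_def using assms by auto
      next
        case False
        then obtain v where v: "v \<in> V" "K = cls V E v" "K \<noteq> cls V E x" "K \<noteq> cls V E y"
          using K unfolding comps_def by auto
        then have "\<not> (conn E v x \<or> conn E v y)" using cls_eq by blast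
        then have "K = cls V (insert {x, y} E) v" using c v by auto
        then show ?thesis unfolding comps_def using v by auto
      qed
    qed
  qed
qed

lemma ncomp_insert_new:
  assumes "\<not> conn E x y" "x \<in> V" "y \<in> V" "finite V"
  shows "ncomp V (insert {x, y} E) + 1 = ncomp V E"
proof -
  let ?X = "cls V E x" and ?Y = "cls V E y"
  have ne: "?X \<noteq> ?Y" using cls_eq_iff assms by auto
  have XY: "?X \<in> comps V E" "?Y \<in> comps V E" using assms unfolding comps_def by auto
  have notin: "?X \<union> ?Y \<notin> comps V E - {?X, ?Y}"
  proof
    assume "?X \<union> ?Y \<in> comps V E - {?X, ?Y}"
    then obtain v where v: "v \<in> V" "?X \<union> ?Y = cls V E v" "cls V E v \<noteq> ?X"
      unfolding comps_def by auto
    have "x \<in> cls V E v" using v(2) cls_in[OF assms(2)] by auto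
    then have "conn E v x" unfolding cls_def by auto
    then show False using v cls_eq by metis
  qed
  have fin: "finite (comps V E)" using finite_comps[OF assms(4)] .
  have "card (comps V E - {?X, ?Y}) + 2 = card (comps V E)"
  proof -
    have "card {?X, ?Y} = 2" using ne by simp
    moreover have "card {?X, ?Y} \<le> card (comps V E)" using XY fin by (intro card_mono) auto
    ultimately show ?thesis using XY fin by (simp add: card_Diff_subset)
  qed
  then show ?thesis
    unfolding ncomp_def comps_insert_new[OF assms(1-3)]
    using notin fin by (simp add: card_insert_if)
qed

lemma ncomp_insert_bounds:
  assumes "x \<in> V" "y \<in> V" "finite V"
  shows "ncomp V (insert {x, y} E) \<le> ncomp V E" "ncomp V E \<le> ncomp V (insert {x, y} E) + 1"
proof -
  have "ncomp V (insert {x, y} E) \<le> ncomp V E \<and> ncomp V E \<le> ncomp V (insert {x, y} E) + 1"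
  proof (cases "conn E x y")
    case True
    then show ?thesis using ncomp_insert_same[OF True] unfolding ncomp_def by simp
  next
    case False
    then show ?thesis using ncomp_insert_new[OF False assms] by simp
  qed
  then show "ncomp V (insert {x, y} E) \<le> ncomp V E" "ncomp V E \<le> ncomp V (insert {x, y} E) + 1"
    by auto
qed

lemma okE_subset: "okE V E \<Longrightarrow> S \<subseteq> E \<Longrightarrow> okE V S"
  unfolding okE_def by blast

lemma okE_insert: "okE V (insert e E) \<longleftrightarrow> (\<exists>x y. e = {x, y} \<and> x \<in> V \<and> y \<in> V) \<and> okE V E"
  unfolding okE_def by blast

lemma okE_Un: "okE V (A \<union> B) \<longleftrightarrow> okE V A \<and> okE V B"
  unfolding okE_def by blast

lemma ncomp_empty: "finite V \<Longrightarrow> ncomp V {} = card V"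
proof -
  assume "finite V"
  have "cls V {} v = {v}" if "v \<in> V" for v
    using that unfolding cls_def erel_def by auto
  then have "comps V {} = (\<lambda>v. {v}) ` V" unfolding comps_def by auto
  then show ?thesis unfolding ncomp_def by (simp add: card_image)
qed

lemma ncomp_lower:
  assumes "finite V" "finite E" "okE V E"
  shows "card V \<le> ncomp V E + card E"
  using assms(2,3)
proof (induction E rule: finite_induct)
  case empty then show ?case using ncomp_empty[OF assms(1)] by simp
next
  case (insert e E)
  then obtain x y where e: "e = {x, y}" "x \<in> V" "y \<in> V" and ok: "okE V E"
    by (auto simp: okE_insert)
  have "ncomp V E \<le> ncomp V (insert e E) + 1"
    using ncomp_insert_bounds(2)[OF e(2,3) assms(1)] e by simp
  then show ?case using insert ok by simp
qed

lemma ncomp_remove: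
  assumes "finite V" "finite D" "okE V D"
  shows "ncomp V S \<le> ncomp V (S \<union> D) + card D"
  using assms(2,3)
proof (induction D rule: finite_induct)
  case empty then show ?case by simp
next
  case (insert e D)
  then obtain x y where e: "e = {x, y}" "x \<in> V" "y \<in> V" and ok: "okE V D"
    by (auto simp: okE_insert)
  have "ncomp V (S \<union> D) \<le> ncomp V (insert e (S \<union> D)) + 1"
    using ncomp_insert_bounds(2)[OF e(2,3) assms(1)] e by simp
  then show ?case using insert ok by simp
qed

lemma connects_erel: "connects V E \<longleftrightarrow> (\<forall>u\<in>V. \<forall>v\<in>V. conn E u v)"
  unfolding connects_def erel_def by simp

lemma connects_ncomp:
  assumes "V \<noteq> {}"
  shows "connects V E \<longleftrightarrow> ncomp V E = 1"
proof
  assume c: "connects V E"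
  obtain v where v: "v \<in> V" using assms by auto
  have eq: "cls V E u = cls V E v" if "u \<in> V" for u
    by (rule cls_eq) (use c that v in \<open>simp add: connects_erel\<close>)
  have "cls V E ` V = (\<lambda>_. cls V E v) ` V" by (rule image_cong[OF refl eq])
  then have "comps V E = {cls V E v}"
    unfolding comps_def using v by auto
  then show "ncomp V E = 1" unfolding ncomp_def by simp
next
  assume "ncomp V E = 1"
  then obtain K where K: "comps V E = {K}" unfolding ncomp_def by (auto simp: card_Suc_eq)
  show "connects V E" unfolding connects_erel
  proof (intro ballI)
    fix u v assume "u \<in> V" "v \<in> V"
    then have "cls V E u = cls V E v" using K unfolding comps_def by blast
    then show "conn E u v" using cls_eq_iff \<open>u \<in> V\<close> \<open>v \<in> V\<close> by blast
  qed
qed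

lemma forest_sub:
  assumes "finite V" "finite M" "okE V M" "ncomp V M = 1" "card M + 1 = card V" "S \<subseteq> M"
  shows "ncomp V S + card S = card V"
proof -
  have fS: "finite S" using assms(2,6) finite_subset by blast
  have l: "card V \<le> ncomp V S + card S"
    using ncomp_lower[OF assms(1) fS okE_subset[OF assms(3,6)]] .
  have "ncomp V S \<le> ncomp V (S \<union> (M - S)) + card (M - S)"
    using ncomp_remove[OF assms(1), of "M - S" S] assms(2,3) okE_subset[OF assms(3)] by blast
  moreover have "S \<union> (M - S) = M" using assms(6) by blast
  moreover have "card (M - S) + card S = card M"
    using card_Diff_subset[OF fS assms(6)] card_mono[OF assms(2,6)] by simp
  ultimately have "ncomp V S \<le> ncomp V M + card (M - S)" "card (M - S) + card S = card M"
    by simp_all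
  then show ?thesis using l assms(4,5) by linarith
qed

lemma cls_add_conn:
  assumes "\<forall>e\<in>D. \<exists>x y. e = {x, y} \<and> conn E x y"
  shows "cls V (E \<union> D) = cls V E"
proof -
  have "erel (E \<union> D) \<subseteq> (erel E)\<^sup>*"
  proof
    fix z assume "z \<in> erel (E \<union> D)"
    then obtain u v where z: "z = (u, v)" "{u, v} \<in> E \<union> D" unfolding erel_def by auto
    show "z \<in> (erel E)\<^sup>*"
    proof (cases "{u, v} \<in> E")
      case True then show ?thesis using z conn_edge by simp
    next
      case False
      then obtain x y where "{u, v} = {x, y}" "conn E x y" using z assms by blast
      then show ?thesis using z by (auto simp: doubleton_eq_iff dest: conn_sym)
    qed
  qed
  then have "(erel (E \<union> D))\<^sup>* \<subseteq> (erel E)\<^sup>*" by (rule rtrancl_subset_rtrancl)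
  moreover have "(erel E)\<^sup>* \<subseteq> (erel (E \<union> D))\<^sup>*" by (rule rtrancl_mono, rule erel_mono) auto
  ultimately have "(erel (E \<union> D))\<^sup>* = (erel E)\<^sup>*" by blast
  then show ?thesis unfolding cls_def[abs_def] by simp
qed

lemma comps_add_conn:
  assumes "\<forall>e\<in>D. \<exists>x y. e = {x, y} \<and> conn E x y"
  shows "comps V (E \<union> D) = comps V E"
  unfolding comps_def cls_add_conn[OF assms] ..

lemma tree_path:
  assumes fV: "finite V" and fM: "finite M" and ok: "okE V M" and c1: "ncomp V M = 1"
    and cM: "card M + 1 = card V" and xy: "x \<in> V" "y \<in> V"
    and fD: "finite D" and DM: "D \<subseteq> M"
    and h: "\<forall>e\<in>D. conn (M - {e}) x y"
  shows "conn (M - D) x y"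
  using fD DM h
proof (induction D rule: finite_induct)
  case empty
  have "V \<noteq> {}" using xy by auto
  then show ?case using c1 connects_ncomp[of V M] xy by (simp add: connects_erel)
next
  case (insert e1 D)
  let ?N = "M - D"
  have IH: "conn ?N x y" using insert by auto
  have e1N: "e1 \<in> ?N" using insert by auto
  have e1M: "e1 \<in> M" using insert.prems by auto
  from ok e1M obtain u v where uv: "e1 = {u, v}" "u \<in> V" "v \<in> V" unfolding okE_def by blast
  have eq: "M - insert e1 D = ?N - {e1}" by blast
  show ?case unfolding eq
  proof (rule ccontr)
    assume nc: "\<not> conn (?N - {e1}) x y"
    have fN: "finite ?N" using fM by simp
    have f1: "ncomp V (?N - {e1}) + card (?N - {e1}) = card V"
      by (rule forest_sub[OF fV fM ok c1 cM]) auto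
    have f2: "ncomp V ?N + card ?N = card V"
      by (rule forest_sub[OF fV fM ok c1 cM]) auto
    have cN: "card (?N - {e1}) + 1 = card ?N" using e1N fN
      by (metis card_Suc_Diff1 Suc_eq_plus1)
    define G0 where "G0 = insert {x, y} (?N - {e1})"
    have g0: "ncomp V G0 + 1 = ncomp V (?N - {e1})"
      unfolding G0_def by (rule ncomp_insert_new[OF nc xy fV])
    have ins1: "insert e1 G0 = insert {x, y} ?N" unfolding G0_def using e1N by blast
    have nN: "ncomp V (insert {x, y} ?N) = ncomp V ?N"
      using ncomp_insert_same[OF IH] unfolding ncomp_def by simp
    have i2: "insert {u, v} G0 = insert {x, y} ?N" using ins1 uv by simp
    have same: "ncomp V (insert {u, v} G0) = ncomp V G0"
    proof -
      have "ncomp V (insert {u, v} G0) = ncomp V (insert {x, y} ?N)" by (simp only: i2)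
      then show ?thesis using nN f1 f2 g0 cN by linarith
    qed
    have cuv: "conn G0 u v"
    proof (rule ccontr)
      assume "\<not> conn G0 u v"
      from ncomp_insert_new[OF this uv(2,3) fV] show False
        using same by linarith
    qed
    define H where "H = insert {x, y} (M - {e1})"
    have G0H: "G0 \<subseteq> H" unfolding G0_def H_def by blast
    have cMe: "conn (M - {e1}) x y" using insert.prems by auto
    have "ncomp V (M - {e1}) + card (M - {e1}) = card V"
      by (rule forest_sub[OF fV fM ok c1 cM]) auto
    moreover have "card (M - {e1}) + 1 = card M" using insert.prems fM
      by (metis card_Suc_Diff1 Suc_eq_plus1 insert_subset)
    ultimately have h2: "ncomp V (M - {e1}) = 2" using cM by simp
    have hH: "ncomp V H = 2" unfolding H_def ncomp_def
      using ncomp_insert_same[OF cMe] h2 unfolding ncomp_def by simp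
    have cH: "conn H u v" using conn_mono[OF cuv G0H] .
    have "ncomp V (insert {u, v} H) = 2"
      using ncomp_insert_same[OF cH] hH unfolding ncomp_def by simp
    moreover have "insert {u, v} H = insert {x, y} M"
      unfolding H_def using uv insert.prems by blast
    moreover have "ncomp V (insert {x, y} M) = 1"
    proof -
      have "V \<noteq> {}" using xy by auto
      then have cxy: "conn M x y" using c1 connects_ncomp[of V M] xy by (simp add: connects_erel)
      show ?thesis using ncomp_insert_same[OF cxy] c1 unfolding ncomp_def by simp
    qed
    ultimately show False by simp
  qed
qed

lemma nontriv_count:
  assumes fV: "finite V" and fD: "finite D" and ok: "okE V D"
  shows "card {K \<in> comps V E1. K \<notin> comps V (E1 \<union> D)} + 2 * ncomp V (E1 \<union> D) \<le> 2 * ncomp V E1"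
  using fD ok
proof (induction D rule: finite_induct)
  case empty then show ?case by simp
next
  case (insert e D)
  then obtain x y where e: "e = {x, y}" "x \<in> V" "y \<in> V" and okD: "okE V D"
    by (auto simp: okE_insert)
  let ?E = "E1 \<union> D"
  have IH: "card {K \<in> comps V E1. K \<notin> comps V ?E} + 2 * ncomp V ?E \<le> 2 * ncomp V E1"
    using insert okD by blast
  have eq: "E1 \<union> insert e D = insert {x, y} ?E" using e by blast
  have fin: "finite {K \<in> comps V E1. K \<notin> comps V ?E}" using finite_comps[OF fV] by simp
  show ?case
  proof (cases "conn ?E x y")
    case True
    then show ?thesis unfolding eq using ncomp_insert_same[OF True] IH unfolding ncomp_def by simp
  next
    case False
    have n: "ncomp V (insert {x, y} ?E) + 1 = ncomp V ?E" by (rule ncomp_insert_new[OF False e(2,3) fV])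
    have sub: "{K \<in> comps V E1. K \<notin> comps V (insert {x, y} ?E)} \<subseteq>
          {K \<in> comps V E1. K \<notin> comps V ?E} \<union> {cls V ?E x, cls V ?E y}"
      unfolding comps_insert_new[OF False e(2,3)] by blast
    have "card {K \<in> comps V E1. K \<notin> comps V (insert {x, y} ?E)} \<le>
          card ({K \<in> comps V E1. K \<notin> comps V ?E} \<union> {cls V ?E x, cls V ?E y})"
      by (rule card_mono[OF _ sub]) (use fin in simp)
    also have "\<dots> \<le> card {K \<in> comps V E1. K \<notin> comps V ?E} + card {cls V ?E x, cls V ?E y}"
      by (rule card_Un_le)
    also have "\<dots> \<le> card {K \<in> comps V E1. K \<notin> comps V ?E} + 2"
      by (cases "cls V ?E x = cls V ?E y") auto
    finally show ?thesis unfolding eq using n IH by linarith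
  qed
qed

lemma edge_inj: "{k, Suc k} = {i, Suc i} \<longleftrightarrow> k = i"
  by (auto simp: doubleton_eq_iff)

lemma inj_edge: "inj_on (\<lambda>k. {k, Suc k}) A"
  unfolding inj_on_def by (simp add: edge_inj)

lemma EP_image: "path_edges n = (\<lambda>k. {k, Suc k}) ` {..<n}"
  unfolding path_edges_def by auto

lemma card_EP: "card (path_edges n) = n" and finite_EP: "finite (path_edges n)"
  unfolding EP_image by (simp_all add: card_image inj_edge)

lemma okE_EP: "okE {0..n} (path_edges n)"
  unfolding okE_def
proof (intro ballI)
  fix e assume "e \<in> path_edges n"
  then obtain i where "e = {i, Suc i}" "i < n" unfolding path_edges_def by auto
  then show "\<exists>x y. e = {x, y} \<and> x \<in> {0..n} \<and> y \<in> {0..n}"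
    by (intro exI[of _ i] exI[of _ "Suc i"]) auto
qed

lemma path_conn: "k \<le> n \<Longrightarrow> conn (path_edges n) 0 k"
proof (induction k)
  case 0 then show ?case by simp
next
  case (Suc k)
  have "{k, Suc k} \<in> path_edges n" using Suc.prems unfolding path_edges_def by auto
  then have "conn (path_edges n) k (Suc k)" by (rule conn_edge)
  then show ?case using Suc by (auto intro: conn_trans)
qed

lemma ncomp_EP: "ncomp {0..n} (path_edges n) = 1"
proof -
  have "connects {0..n} (path_edges n)" unfolding connects_erel
    using path_conn[of _ n] by (meson atLeastAtMost_iff conn_sym conn_trans)
  then show ?thesis using connects_ncomp[of "{0..n}"] by simp
qed

lemma w_path: "k < n \<Longrightarrow> edge_weight n c p {k, Suc k} = c k"
proof -
  assume k: "k < n"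
  have "{k, Suc k} \<in> path_edges n" using k unfolding path_edges_def by auto
  moreover have "(THE i. i < n \<and> {k, Suc k} = {i, Suc i}) = k"
    by (rule the_equality) (use k edge_inj in auto)
  ultimately show ?thesis unfolding edge_weight_def by simp
qed

lemma nonpath_finite: "finite (nonpath_pairs n)"
proof -
  have "nonpath_pairs n \<subseteq> Pow {0..n}" unfolding nonpath_pairs_def by auto
  then show ?thesis by (rule finite_subset) simp
qed

locale stk =
  fixes n :: nat and c :: "nat \<Rightarrow> real" and a b :: real
    and F :: "nat set set" and p :: "nat set \<Rightarrow> real" and M :: "nat set set"
  assumes a0: "0 \<le> a" and ab: "a < b"
    and cab: "\<forall>i<n. c i \<in> {a, b}"
    and FN: "F \<subseteq> nonpath_pairs n"
    and p0: "\<forall>e\<in>F. 0 \<le> p e"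
    and fc: "follower_choice n c F p M"
begin

abbreviation "V \<equiv> {0..n}"
abbreviation "EP \<equiv> path_edges n"
abbreviation "w \<equiv> edge_weight n c p"

definition "Aall = {{k, Suc k} | k. k < n \<and> c k = a}"
definition "Ma = {e \<in> M. w e \<le> a}"
definition "Lc = {e \<in> F \<inter> M. p e \<le> a}"

lemma cardV: "card V = n + 1" by simp

lemma finite_F: "finite F" using FN nonpath_finite finite_subset by blast

lemma F_props: "e \<in> F \<Longrightarrow> e \<notin> EP \<and> (\<exists>u v. e = {u, v} \<and> u \<le> n \<and> v \<le> n \<and> u \<noteq> v)"
  using FN unfolding nonpath_pairs_def by auto

lemma w_F: "e \<in> F \<Longrightarrow> w e = p e"
  using F_props unfolding edge_weight_def by auto

lemma okE_F: "okE V F"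
  unfolding okE_def using F_props by fastforce

lemma mst: "spanning_tree V (EP \<union> F) M"
  "\<And>M'. spanning_tree V (EP \<union> F) M' \<Longrightarrow> tree_weight n c p M \<le> tree_weight n c p M'"
  using fc unfolding follower_choice_def is_mst_def path_vertices_def by auto

lemma M_sub: "M \<subseteq> EP \<union> F" and cardM: "card M = n" and connM: "connects V M"
  using mst(1) unfolding spanning_tree_def by auto

lemma finite_M: "finite M"
  using M_sub finite_EP finite_F finite_subset by blast

lemma okE_M: "okE V M"
  using okE_subset[OF _ M_sub] okE_EP okE_F by (simp add: okE_Un)

lemma ncomp_M: "ncomp V M = 1"
  using connM connects_ncomp[of V M] by simp

lemma cardM1: "card M + 1 = card V" using cardM by simp

lemma EP_F_disj: "EP \<inter> F = {}" using F_props by blast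

lemma noloop: "{v, u} \<in> M \<Longrightarrow> v \<noteq> u"
proof
  assume "{v, u} \<in> M" "v = u"
  then have "{v} \<in> EP \<union> F" using M_sub by auto
  then show False
  proof
    assume "{v} \<in> EP" then show False unfolding path_edges_def by (auto simp: doubleton_eq_iff)
  next
    assume "{v} \<in> F" then show False using F_props by (auto simp: doubleton_eq_iff)
  qed
qed

lemma M_edge: "e \<in> M \<Longrightarrow> \<exists>x y. e = {x, y} \<and> x \<le> n \<and> y \<le> n"
  using okE_M unfolding okE_def by auto

lemma forest: "S \<subseteq> M \<Longrightarrow> ncomp V S + card S = n + 1"
  using forest_sub[OF _ finite_M okE_M ncomp_M cardM1] by simp

lemma exch:
  assumes e: "e \<in> M" and xy: "x \<le> n" "y \<le> n" and r: "{x, y} \<in> EP \<union> F"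
    and nc: "\<not> conn (M - {e}) x y"
  shows "w e \<le> w {x, y}"
proof -
  define T where "T = insert {x, y} (M - {e})"
  have fM: "finite (M - {e})" using finite_M by simp
  have cme: "card (M - {e}) + 1 = n" using e finite_M cardM by (metis card_Suc_Diff1 Suc_eq_plus1)
  have "ncomp V (M - {e}) + card (M - {e}) = n + 1" by (rule forest) auto
  then have n2: "ncomp V (M - {e}) = 2" using cme by simp
  have "ncomp V T + 1 = ncomp V (M - {e})" unfolding T_def
    by (rule ncomp_insert_new[OF nc]) (use xy in auto)
  then have "ncomp V T = 1" using n2 by simp
  then have cT: "connects V T" using connects_ncomp[of V T] by simp
  have notin: "{x, y} \<notin> M - {e}"
  proof
    assume "{x, y} \<in> M - {e}"
    then have "conn (M - {e}) x y" by (rule conn_edge)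
    with nc show False by simp
  qed
  have cardT: "card T = n" unfolding T_def using notin fM cme by simp
  have "T \<subseteq> EP \<union> F" unfolding T_def using M_sub r by blast
  then have "spanning_tree V (EP \<union> F) T" unfolding spanning_tree_def using cT cardT by simp
  then have le: "tree_weight n c p M \<le> tree_weight n c p T" by (rule mst(2))
  have "tree_weight n c p M = w e + sum w (M - {e})"
    unfolding tree_weight_def using e finite_M by (simp add: sum.remove)
  moreover have "tree_weight n c p T = w {x, y} + sum w (M - {e})"
    unfolding tree_weight_def T_def using notin fM by simp
  ultimately show ?thesis using le by simp
qed

lemma leader_le_b:
  assumes e: "e \<in> F \<inter> M"
  shows "p e \<le> b"
proof -
  have cme: "card (M - {e}) + 1 = n" using e finite_M cardM by (metis IntD2 card_Suc_Diff1 Suc_eq_plus1)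
  have "ncomp V (M - {e}) + card (M - {e}) = n + 1" by (rule forest) auto
  then have n2: "ncomp V (M - {e}) = 2" using cme by simp
  have "\<exists>k<n. \<not> conn (M - {e}) k (Suc k)"
  proof (rule ccontr)
    assume "\<not> ?thesis"
    then have allc: "\<forall>r\<in>EP. \<exists>x y. r = {x, y} \<and> conn (M - {e}) x y"
      unfolding path_edges_def by auto
    have cc: "comps V ((M - {e}) \<union> EP) = comps V (M - {e})" by (rule comps_add_conn[OF allc])
    have cEP: "connects V EP" using ncomp_EP connects_ncomp[of V EP] by simp
    have "connects V ((M - {e}) \<union> EP)" unfolding connects_erel
    proof (intro ballI)
      fix u v assume "u \<in> V" "v \<in> V"
      then have "conn EP u v" using cEP by (simp add: connects_erel)
      then show "conn ((M - {e}) \<union> EP) u v" by (rule conn_mono) auto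
    qed
    then have "ncomp V ((M - {e}) \<union> EP) = 1" using connects_ncomp[of V] by simp
    then show False using cc n2 unfolding ncomp_def by simp
  qed
  then obtain k where k: "k < n" "\<not> conn (M - {e}) k (Suc k)" by blast
  have "{k, Suc k} \<in> EP \<union> F" unfolding path_edges_def using k by auto
  from exch[OF _ _ _ this k(2)] e k have "w e \<le> w {k, Suc k}" by auto
  then have "p e \<le> c k" using w_F w_path k e by auto
  then show ?thesis using cab k ab by auto
qed

lemma Ma_sub: "Ma \<subseteq> M" unfolding Ma_def by auto

lemma kruskal:
  assumes k: "k < n" "c k = a"
  shows "conn Ma k (Suc k)"
proof (rule ccontr)
  assume nc: "\<not> conn Ma k (Suc k)"
  have MD: "M - (M - Ma) = Ma" using Ma_sub by blast
  have "\<exists>e\<in>M - Ma. \<not> conn (M - {e}) k (Suc k)"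
  proof (rule ccontr)
    assume "\<not> ?thesis"
    then have "conn (M - (M - Ma)) k (Suc k)"
      by (intro tree_path[OF _ finite_M okE_M ncomp_M cardM1]) (use k finite_M in auto)
    then show False using nc MD by simp
  qed
  then obtain e where e: "e \<in> M" "e \<notin> Ma" "\<not> conn (M - {e}) k (Suc k)" by blast
  have "{k, Suc k} \<in> EP \<union> F" unfolding path_edges_def using k by auto
  from exch[OF e(1) _ _ this e(3)] k have "w e \<le> w {k, Suc k}" by auto
  then have "w e \<le> a" using w_path k by simp
  then show False using e unfolding Ma_def by auto
qed

end

context stk begin

lemma Aall_image: "Aall = (\<lambda>k. {k, Suc k}) ` {k. k < n \<and> c k = a}"
  unfolding Aall_def by auto

lemma finite_Aall: "finite Aall" unfolding Aall_image by simp

lemma Aall_sub: "Aall \<subseteq> EP" unfolding Aall_def path_edges_def by auto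

lemma Aall_mem: "k < n \<Longrightarrow> {k, Suc k} \<in> Aall \<longleftrightarrow> c k = a"
  unfolding Aall_def using edge_inj by auto

lemma EP_cases: "e \<in> EP \<Longrightarrow> \<exists>k<n. e = {k, Suc k}"
  unfolding path_edges_def by auto

lemma Lc_sub: "Lc \<subseteq> F \<inter> M" unfolding Lc_def by auto

lemma finite_Lc: "finite Lc" using Lc_sub finite_M finite_subset by blast

lemma Ma_split: "Ma = (M \<inter> Aall) \<union> Lc"
proof (rule set_eqI)
  fix e
  show "e \<in> Ma \<longleftrightarrow> e \<in> (M \<inter> Aall) \<union> Lc"
  proof (cases "e \<in> M")
    case False then show ?thesis unfolding Ma_def Lc_def by auto
  next
    case True
    then have "e \<in> EP \<or> e \<in> F" using M_sub by auto
    then show ?thesis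
    proof
      assume eP: "e \<in> EP"
      then obtain k where k: "k < n" "e = {k, Suc k}" using EP_cases by blast
      have "e \<notin> F" using eP EP_F_disj by blast
      then have "e \<notin> Lc" unfolding Lc_def by auto
      moreover have "w e = c k" using k w_path by simp
      moreover have "c k \<le> a \<longleftrightarrow> c k = a" using cab k ab by auto
      ultimately show ?thesis using True k Aall_mem unfolding Ma_def by auto
    next
      assume eF: "e \<in> F"
      then have "e \<notin> Aall" using Aall_sub EP_F_disj by blast
      then show ?thesis using eF True w_F unfolding Ma_def Lc_def by auto
    qed
  qed
qed

lemma card_Ma: "card Ma = card (M \<inter> Aall) + card Lc"
proof -
  have "(M \<inter> Aall) \<inter> Lc = {}" using Lc_sub Aall_sub EP_F_disj by blast
  then show ?thesis unfolding Ma_split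
    using finite_Lc finite_M by (simp add: card_Un_disjoint)
qed

lemma key_count:
  "card {K \<in> comps V Aall. K \<notin> comps V (Aall \<union> Ma)} + 2 * card Aall
     \<le> 2 * (card (M \<inter> Aall) + card Lc)"
proof -
  have okMa: "okE V Ma" using okE_subset[OF okE_M Ma_sub] .
  have fMa: "finite Ma" using Ma_sub finite_M finite_subset by blast
  have nt: "card {K \<in> comps V Aall. K \<notin> comps V (Aall \<union> Ma)} + 2 * ncomp V (Aall \<union> Ma)
      \<le> 2 * ncomp V Aall"
    by (rule nontriv_count[OF _ fMa okMa]) simp
  have allc: "\<forall>r\<in>Aall. \<exists>x y. r = {x, y} \<and> conn Ma x y"
    unfolding Aall_def using kruskal by blast
  have "comps V (Ma \<union> Aall) = comps V Ma" by (rule comps_add_conn[OF allc])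
  then have e1: "ncomp V (Aall \<union> Ma) = ncomp V Ma" unfolding ncomp_def by (simp add: Un_commute)
  have e2: "ncomp V Ma + card Ma = n + 1" by (rule forest[OF Ma_sub])
  have e3: "ncomp V Aall + card Aall = n + 1"
    using forest_sub[OF _ finite_EP okE_EP ncomp_EP _ Aall_sub] card_EP by simp
  define NT where "NT = card {K \<in> comps V Aall. K \<notin> comps V (Aall \<union> Ma)}"
  have "NT + 2 * ncomp V (Aall \<union> Ma) \<le> 2 * ncomp V Aall" using nt unfolding NT_def .
  then have h1: "NT + 2 * ncomp V Ma \<le> 2 * ncomp V Aall" using e1 by simp
  obtain x y z where x: "ncomp V Ma = x" and y: "ncomp V Aall = y" and z: "card Ma = z" by blast
  have "x + z = n + 1" "y + card Aall = n + 1" "NT + 2 * x \<le> 2 * y"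
    "z = card (M \<inter> Aall) + card Lc"
    using h1 e2 e3 card_Ma x y z by simp_all
  then have "NT + 2 * card Aall \<le> 2 * (card (M \<inter> Aall) + card Lc)"
    by presburger
  then show ?thesis unfolding NT_def .
qed

definition "Bad = {(i, j) \<in> a_blocks n c a. j - i + 1 < 3}"
definition "Kept = {(i, j) \<in> Bad. \<exists>t. i \<le> t \<and> t \<le> j \<and> {t, Suc t} \<in> M}"

lemma finite_Bad: "finite Bad"
proof -
  have "Bad \<subseteq> {..<n} \<times> {..<n}" unfolding Bad_def a_blocks_def by auto
  then show ?thesis by (rule finite_subset) simp
qed

lemma block_same:
  assumes B: "(i, j) \<in> a_blocks n c a" and B': "(i', j') \<in> a_blocks n c a"
    and t: "i \<le> t" "t \<le> j" "i' \<le> t" "t \<le> j'"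
  shows "i = i' \<and> j = j'"
proof -
  have Bi: "\<forall>k\<in>{i..j}. c k = a" "i = 0 \<or> c (i - 1) \<noteq> a" "Suc j = n \<or> c (Suc j) \<noteq> a" "j < n"
    using B unfolding a_blocks_def by auto
  have Bi': "\<forall>k\<in>{i'..j'}. c k = a" "i' = 0 \<or> c (i' - 1) \<noteq> a" "Suc j' = n \<or> c (Suc j') \<noteq> a" "j' < n"
    using B' unfolding a_blocks_def by auto
  have ii: "i = i'"
  proof (rule ccontr)
    assume "i \<noteq> i'"
    then consider "i < i'" | "i' < i" by linarith
    then show False
    proof cases
      case 1
      then have "i' - 1 \<in> {i..j}" using t by auto
      then show False using Bi(1) Bi'(2) 1 by auto
    next
      case 2
      then have "i - 1 \<in> {i'..j'}" using t by auto
      then show False using Bi'(1) Bi(2) 2 by auto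
    qed
  qed
  have jj: "j = j'"
  proof (rule ccontr)
    assume "j \<noteq> j'"
    then consider "j < j'" | "j' < j" by linarith
    then show False
    proof cases
      case 1
      then have "Suc j \<in> {i'..j'}" using t ii by auto
      then show False using Bi'(1) Bi(3) Bi'(4) 1 by auto
    next
      case 2
      then have "Suc j' \<in> {i..j}" using t ii by auto
      then show False using Bi(1) Bi'(3) Bi(4) 2 by auto
    qed
  qed
  show ?thesis using ii jj by simp
qed

lemma block_reach:
  assumes B: "(i, j) \<in> a_blocks n c a" and r: "conn Aall i u"
  shows "i \<le> u \<and> u \<le> Suc j"
  using r
proof (induction rule: rtrancl_induct)
  case base
  then show ?case using B unfolding a_blocks_def by auto
next
  case (step u u')
  have Bi: "i = 0 \<or> c (i - 1) \<noteq> a" "Suc j = n \<or> c (Suc j) \<noteq> a" "i \<le> j"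
    using B unfolding a_blocks_def by auto
  from step(2) have "{u, u'} \<in> Aall" unfolding erel_def by auto
  then obtain k where k: "k < n" "c k = a" "{u, u'} = {k, Suc k}" unfolding Aall_def by auto
  then have "(u = k \<and> u' = Suc k) \<or> (u = Suc k \<and> u' = k)" by (auto simp: doubleton_eq_iff)
  then show ?case
  proof
    assume h: "u = k \<and> u' = Suc k"
    have "k \<noteq> Suc j" using Bi(2) k by auto
    then show ?thesis using h step(3) by auto
  next
    assume h: "u = Suc k \<and> u' = k"
    have "Suc k \<noteq> i" using Bi(1) k by auto
    then show ?thesis using h step(3) by auto
  qed
qed

lemma kept_le: "card Kept \<le> card (M \<inter> Aall)"
proof -
  define g where "g = (\<lambda>(i::nat, j::nat). SOME t. i \<le> t \<and> t \<le> j \<and> {t, Suc t} \<in> M)"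
  have gp: "i \<le> g (i, j) \<and> g (i, j) \<le> j \<and> {g (i, j), Suc (g (i, j))} \<in> M" if "(i, j) \<in> Kept" for i j
  proof -
    from that obtain t where "i \<le> t \<and> t \<le> j \<and> {t, Suc t} \<in> M" unfolding Kept_def by auto
    then show ?thesis unfolding g_def by (simp, rule someI)
  qed
  define f where "f = (\<lambda>x. {g x, Suc (g x)})"
  have "inj_on f Kept"
  proof (rule inj_onI)
    fix x y assume x: "x \<in> Kept" and y: "y \<in> Kept" and fxy: "f x = f y"
    obtain i j where xi: "x = (i, j)" by (cases x)
    obtain i' j' where yi: "y = (i', j')" by (cases y)
    have "g x = g y" using fxy unfolding f_def by (simp add: edge_inj)
    moreover have "(i, j) \<in> a_blocks n c a" "(i', j') \<in> a_blocks n c a"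
      using x y xi yi unfolding Kept_def Bad_def by auto
    ultimately show "x = y" using block_same gp x y xi yi by metis
  qed
  moreover have "f ` Kept \<subseteq> M \<inter> Aall"
  proof
    fix e assume "e \<in> f ` Kept"
    then obtain i j where ij: "(i, j) \<in> Kept" "e = f (i, j)" by auto
    then have B: "(i, j) \<in> a_blocks n c a" unfolding Kept_def Bad_def by auto
    have t: "i \<le> g (i, j)" "g (i, j) \<le> j" "{g (i, j), Suc (g (i, j))} \<in> M" using gp[OF ij(1)] by auto
    have "c (g (i, j)) = a" "g (i, j) < n" using B t unfolding a_blocks_def by auto
    then show "e \<in> M \<inter> Aall" using t ij Aall_mem unfolding f_def by auto
  qed
  moreover have "finite (M \<inter> Aall)" using finite_M by simp
  ultimately show ?thesis by (rule card_inj_on_le)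
qed

lemma rem_nt:
  assumes R: "(i, j) \<in> Bad - Kept"
  shows "cls V Aall i \<in> {K \<in> comps V Aall. K \<notin> comps V (Aall \<union> Ma)}"
proof -
  have B: "(i, j) \<in> a_blocks n c a" and sz: "j - i + 1 < 3" using R unfolding Bad_def by auto
  have Bi: "i \<le> j" "j < n" "\<forall>k\<in>{i..j}. c k = a" using B unfolding a_blocks_def by auto
  have nk: "\<And>t. i \<le> t \<Longrightarrow> t \<le> j \<Longrightarrow> {t, Suc t} \<notin> M" using R unfolding Kept_def Bad_def by auto
  have ci: "c i = a" "i < n" using Bi by auto
  have kr: "conn Ma i (Suc i)" by (rule kruskal[OF ci(2,1)])
  have "\<exists>v w. (v = i \<or> v = Suc i) \<and> {v, w} \<in> Ma \<and> (w < i \<or> Suc j < w)"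
  proof (cases "j = i")
    case True
    from kr show ?thesis
    proof (cases rule: converse_rtranclE)
      case base then show ?thesis by simp
    next
      case (step w)
      then have wM: "{i, w} \<in> Ma" unfolding erel_def by auto
      then have "i \<noteq> w" using noloop Ma_sub by blast
      moreover have "w \<noteq> Suc i" using nk[of i] wM Ma_sub True by auto
      ultimately show ?thesis using wM True by (intro exI[of _ i] exI[of _ w]) auto
    qed
  next
    case False
    then have j: "j = Suc i" using sz Bi by linarith
    have kr2: "conn Ma (Suc i) i" using conn_sym[OF kr] .
    from kr2 show ?thesis
    proof (cases rule: converse_rtranclE)
      case base then show ?thesis by simp
    next
      case (step w)
      then have wM: "{Suc i, w} \<in> Ma" unfolding erel_def by auto
      then have "Suc i \<noteq> w" using noloop Ma_sub by blast
      moreover have "w \<noteq> i" using nk[of i] wM Ma_sub j by (auto simp: insert_commute)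
      moreover have "w \<noteq> Suc (Suc i)" using nk[of "Suc i"] wM Ma_sub j by auto
      ultimately show ?thesis using wM j by (intro exI[of _ "Suc i"] exI[of _ w]) auto
    qed
  qed
  then obtain v w where vw: "v = i \<or> v = Suc i" "{v, w} \<in> Ma" "w < i \<or> Suc j < w" by blast
  have civ: "conn Aall i v"
  proof (cases "v = i")
    case True then show ?thesis by simp
  next
    case False
    then have "v = Suc i" using vw by simp
    moreover have "{i, Suc i} \<in> Aall" using Aall_mem ci by simp
    ultimately show ?thesis using conn_edge by simp
  qed
  have wV: "w \<le> n"
  proof -
    obtain x y where "{v, w} = {x, y}" "x \<le> n" "y \<le> n" using M_edge vw(2) Ma_sub by blast
    then show ?thesis by (auto simp: doubleton_eq_iff)
  qed
  have iw: "conn (Aall \<union> Ma) i w"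
  proof -
    have "conn (Aall \<union> Ma) i v" by (rule conn_mono[OF civ]) auto
    moreover have "conn (Aall \<union> Ma) v w" by (rule conn_edge) (use vw in auto)
    ultimately show ?thesis by (rule conn_trans)
  qed
  have iV: "i \<in> V" using ci by simp
  have inK: "cls V Aall i \<in> comps V Aall" unfolding comps_def using iV by auto
  have notK: "cls V Aall i \<notin> comps V (Aall \<union> Ma)"
  proof
    assume "cls V Aall i \<in> comps V (Aall \<union> Ma)"
    then obtain u where u: "u \<in> V" "cls V Aall i = cls V (Aall \<union> Ma) u" unfolding comps_def by auto
    have "i \<in> cls V Aall i" by (rule cls_in[OF iV])
    then have "i \<in> cls V (Aall \<union> Ma) u" using u(2) by simp
    then have "conn (Aall \<union> Ma) u i" unfolding cls_def by simp
    then have "conn (Aall \<union> Ma) u w" using iw by (rule conn_trans)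
    then have "w \<in> cls V Aall i" using u wV unfolding cls_def by simp
    then have "conn Aall i w" unfolding cls_def by simp
    then show False using block_reach[OF B] vw(3) by fastforce
  qed
  show ?thesis using inK notK by simp
qed

lemma rem_le: "card (Bad - Kept) \<le> card {K \<in> comps V Aall. K \<notin> comps V (Aall \<union> Ma)}"
proof -
  have "inj_on (\<lambda>(i, j). cls V Aall i) (Bad - Kept)"
  proof (rule inj_onI)
    fix x y assume x: "x \<in> Bad - Kept" and y: "y \<in> Bad - Kept"
      and fxy: "(\<lambda>(i, j). cls V Aall i) x = (\<lambda>(i, j). cls V Aall i) y"
    obtain i j where xi: "x = (i, j)" by (cases x)
    obtain i' j' where yi: "y = (i', j')" by (cases y)
    have B: "(i, j) \<in> a_blocks n c a" "(i', j') \<in> a_blocks n c a"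
      using x y xi yi unfolding Bad_def by auto
    have ij: "i \<le> j" "j < n" "i' \<le> j'" "j' < n" using B unfolding a_blocks_def by auto
    have "cls V Aall i = cls V Aall i'" using fxy xi yi by simp
    then have "conn Aall i i'" using cls_eq_iff[of i V i' Aall] ij by simp
    then have "i \<le> i'" "i' \<le> i" using block_reach[OF B(1)] block_reach[OF B(2)] conn_sym by blast+
    then have "i = i'" by simp
    then have "i = i' \<and> j = j'" using block_same[OF B(1) B(2), of i] ij by simp
    then show "x = y" using xi yi by simp
  qed
  moreover have "(\<lambda>(i, j). cls V Aall i) ` (Bad - Kept) \<subseteq> {K \<in> comps V Aall. K \<notin> comps V (Aall \<union> Ma)}"
    using rem_nt by auto
  moreover have "finite {K \<in> comps V Aall. K \<notin> comps V (Aall \<union> Ma)}"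
    using finite_comps[of V] by simp
  ultimately show ?thesis by (rule card_inj_on_le)
qed

lemma card_Bad: "card Bad = num_bad_blocks n c a"
  unfolding Bad_def num_bad_blocks_def ..

lemma Kept_Bad: "card Kept + card (Bad - Kept) = card Bad"
proof -
  have "Kept \<subseteq> Bad" unfolding Kept_def by auto
  then show ?thesis using finite_Bad card_Diff_subset[of Kept Bad] card_mono[of Bad Kept]
    finite_subset[of Kept Bad] by simp
qed

end

lemma final_arith:
  fixes a b loss :: real and k m s Am :: nat and Y :: int
  assumes a0: "0 \<le> a" and ab: "a < b" and km: "k + m = s" and kA: "k \<le> Am"
    and Y: "int m \<le> 2 * Y"
    and loss: "a * real Am + (b - a) * real_of_int Y \<le> loss"
  shows "min (real s * a) (real (s div 2) * (b - a) + real (s - 2 * (s div 2)) * min a (b - a)) \<le> loss"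
proof -
  define h where "h = (m + 1) div 2"
  have Yh: "int h \<le> Y" unfolding h_def using Y by presburger
  have l1: "a * real k + (b - a) * real h \<le> loss"
  proof -
    have "a * real k \<le> a * real Am" using kA a0 by (simp add: mult_left_mono)
    moreover have "(b - a) * real h \<le> (b - a) * real_of_int Y"
      using Yh ab by (intro mult_left_mono) (simp_all add: of_int_le_iff[symmetric])
    ultimately show ?thesis using loss by linarith
  qed
  show ?thesis
  proof (cases "2 * a \<le> b - a")
    case True
    have "2 * h \<ge> m" unfolding h_def by presburger
    then have "real m \<le> 2 * real h" by linarith
    then have "a * real m \<le> a * (2 * real h)" using a0 by (rule mult_left_mono)
    then have "a * real m \<le> 2 * a * real h" by simp
    also have "\<dots> \<le> (b - a) * real h" using True by (simp add: mult_right_mono)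
    finally have f: "a * real m \<le> (b - a) * real h" .
    have "real s * a = a * real k + a * real m" using km[symmetric] by (simp add: algebra_simps)
    then have "real s * a \<le> loss" using l1 f by linarith
    then show ?thesis by linarith
  next
    case False
    have mu: "min a (b - a) \<le> a" "min a (b - a) \<le> b - a" "b - a \<le> 2 * min a (b - a)"
      using False ab by (auto simp: min_def)
    obtain q r where m: "m = 2 * q + r" "r < 2"
      using div_mult_mod_eq[of m 2] by (intro that[of "m div 2" "m mod 2"]) auto
    obtain t u where k: "k = 2 * t + u" "u < 2"
      using div_mult_mod_eq[of k 2] by (intro that[of "k div 2" "k mod 2"]) auto
    have "real t * (b - a) \<le> real t * (2 * a)" using False by (intro mult_left_mono) auto
    then have tb: "real t * (b - a) \<le> a * (2 * real t)" by (simp add: algebra_simps)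
    have "real (s div 2) * (b - a) + real (s - 2 * (s div 2)) * min a (b - a) \<le> loss"
    proof (cases "r = 0")
      case r0: True
      show ?thesis
      proof (cases "u = 0")
        case True
        then have "s div 2 = t + q" "s - 2 * (s div 2) = 0" "h = q" using km m k r0 h_def by auto
        moreover note tb
        ultimately show ?thesis using l1 k True by (simp add: algebra_simps)
      next
        case False
        then have u1: "u = 1" using k by auto
        then have "s div 2 = t + q" "s - 2 * (s div 2) = 1" "h = q" using km m k r0 h_def by auto
        moreover note tb
        ultimately show ?thesis using l1 k u1 mu a0 by (simp add: algebra_simps)
      qed
    next
      case r1: False
      then have r1: "r = 1" using m by auto
      show ?thesis
      proof (cases "u = 0")
        case True
        then have "s div 2 = t + q" "s - 2 * (s div 2) = 1" "h = q + 1" using km m k r1 h_def by auto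
        moreover note tb
        ultimately show ?thesis using l1 k True mu by (simp add: algebra_simps)
      next
        case False
        then have u1: "u = 1" using k by auto
        then have "s div 2 = t + q + 1" "s - 2 * (s div 2) = 0" "h = q + 1" using km m k r1 h_def by auto
        moreover note tb
        ultimately show ?thesis using l1 k u1 mu a0 by (simp add: algebra_simps)
      qed
    qed
    then show ?thesis by linarith
  qed
qed

context stk begin

lemma revenue_bound:
  "revenue F p M \<le> a * real (card Lc) + b * (real (card (F \<inter> M)) - real (card Lc))"
proof -
  have fFM: "finite (F \<inter> M)" using finite_M by simp
  have s: "revenue F p M = sum p Lc + sum p ((F \<inter> M) - Lc)"
    unfolding revenue_def using sum.subset_diff[OF Lc_sub fFM] by (simp add: add.commute)
  have s1: "sum p Lc \<le> a * real (card Lc)"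
    using sum_mono[of Lc p "\<lambda>_. a"] unfolding Lc_def by (simp add: mult.commute)
  have s2: "sum p ((F \<inter> M) - Lc) \<le> b * real (card ((F \<inter> M) - Lc))"
    using sum_mono[of "(F \<inter> M) - Lc" p "\<lambda>_. b"] leader_le_b by (simp add: mult.commute)
  have c: "card ((F \<inter> M) - Lc) = card (F \<inter> M) - card Lc"
    by (rule card_Diff_subset[OF finite_Lc Lc_sub])
  have c2: "card Lc \<le> card (F \<inter> M)" by (rule card_mono[OF fFM Lc_sub])
  have "real (card ((F \<inter> M) - Lc)) = real (card (F \<inter> M)) - real (card Lc)"
    using c c2 by simp
  then show ?thesis using s s1 s2 by simp
qed

lemma card_FM: "card (F \<inter> M) = card (EP - M)"
proof -
  have "M = (M \<inter> EP) \<union> (F \<inter> M)" using M_sub by blast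
  moreover have "(M \<inter> EP) \<inter> (F \<inter> M) = {}" using EP_F_disj by blast
  ultimately have "card M = card (M \<inter> EP) + card (F \<inter> M)"
    using finite_M by (metis card_Un_disjoint finite_Int inf_commute)
  moreover have "card EP = card (EP \<inter> M) + card (EP - M)"
    using finite_EP by (metis card_Int_Diff)
  ultimately show ?thesis using cardM card_EP by (simp add: inf_commute)
qed

lemma cost_eq: "path_cost n c = sum w EP"
proof -
  have "sum w EP = sum (w \<circ> (\<lambda>k. {k, Suc k})) {..<n}"
    unfolding EP_image by (rule sum.reindex[OF inj_edge])
  also have "\<dots> = sum c {..<n}" by (rule sum.cong) (auto simp: w_path)
  finally show ?thesis unfolding path_cost_def by simp
qed

lemma loss_bound:
  "a * real (card (M \<inter> Aall)) + (b - a) * (real (card Lc) + real (card (M \<inter> Aall)) - real (card Aall))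
     \<le> path_cost n c - revenue F p M"
proof -
  have fEP: "finite EP" by (rule finite_EP)
  have w_A: "w e = a" if "e \<in> Aall" for e
    using that w_path unfolding Aall_def by auto
  have w_nA: "w e = b" if h1: "e \<in> EP" and h2: "e \<notin> Aall" for e
  proof -
    obtain k where k: "k < n" "e = {k, Suc k}" using EP_cases[OF h1] by blast
    then have "c k \<noteq> a" using h2 Aall_mem by simp
    then show ?thesis using cab k w_path by auto
  qed
  have w_nn: "0 \<le> w e" if "e \<in> EP" for e
    using that w_A w_nA a0 ab Aall_sub by (cases "e \<in> Aall") auto
  have split1: "sum w EP = sum w (EP \<inter> M) + sum w (EP - M)"
    using fEP by (metis sum.Int_Diff)
  have sub2: "Aall - M \<subseteq> EP - M" using Aall_sub by blast
  have split2: "sum w (EP - M) = sum w (Aall - M) + sum w ((EP - M) - (Aall - M))"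
    using sum.subset_diff[OF sub2] fEP by (simp add: add.commute)
  have fA: "finite Aall" by (rule finite_Aall)
  have sA: "sum w (Aall - M) = a * real (card (Aall - M))"
    using w_A by simp
  have "sum w ((EP - M) - (Aall - M)) = sum (\<lambda>_. b) ((EP - M) - (Aall - M))"
    by (rule sum.cong) (auto intro: w_nA)
  then have sB: "sum w ((EP - M) - (Aall - M)) = b * real (card ((EP - M) - (Aall - M)))"
    by (simp add: mult.commute)
  have sM: "a * real (card (M \<inter> Aall)) \<le> sum w (EP \<inter> M)"
  proof -
    have "sum w (M \<inter> Aall) \<le> sum w (EP \<inter> M)"
      by (rule sum_mono2) (use fEP Aall_sub w_nn in auto)
    moreover have "sum w (M \<inter> Aall) = a * real (card (M \<inter> Aall))" using w_A by simp
    ultimately show ?thesis by simp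
  qed
  have cA: "card (Aall - M) + card (M \<inter> Aall) = card Aall"
    using fA by (metis add.commute card_Int_Diff inf_commute)
  have cB: "card ((EP - M) - (Aall - M)) + card (Aall - M) = card (EP - M)"
    using card_Diff_subset[OF _ sub2] card_mono[OF _ sub2] fA fEP by simp
  have rb: "revenue F p M \<le> a * real (card Lc) + b * (real (card (EP - M)) - real (card Lc))"
    using revenue_bound card_FM by simp
  have cA': "real (card (Aall - M)) = real (card Aall) - real (card (M \<inter> Aall))"
    using cA by (metis add_diff_cancel_right' of_nat_add)
  have cB': "real (card (EP - M)) = real (card ((EP - M) - (Aall - M))) + real (card (Aall - M))"
    using cB by (metis of_nat_add)
  have cost: "path_cost n c = sum w (EP \<inter> M) + a * real (card (Aall - M))
      + b * real (card ((EP - M) - (Aall - M)))"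
    using cost_eq split1 split2 sA sB by simp
  have "path_cost n c - revenue F p M \<ge>
      sum w (EP \<inter> M) + a * real (card (Aall - M)) + b * real (card ((EP - M) - (Aall - M)))
      - a * real (card Lc) - b * (real (card ((EP - M) - (Aall - M))) + real (card (Aall - M)) - real (card Lc))"
    using cost rb cB' by simp
  then show ?thesis using sM cA' by (simp add: algebra_simps)
qed

lemma main:
  "min (real (num_bad_blocks n c a) * a)
       (real (num_bad_blocks n c a div 2) * (b - a)
        + real (num_bad_blocks n c a - 2 * (num_bad_blocks n c a div 2)) * min a (b - a))
     \<le> path_cost n c - revenue F p M"
proof -
  define Y :: int where "Y = int (card Lc) + int (card (M \<inter> Aall)) - int (card Aall)"
  have "card (Bad - Kept) + 2 * card Aall \<le> 2 * (card (M \<inter> Aall) + card Lc)"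
    using rem_le key_count by linarith
  then have Yb: "int (card (Bad - Kept)) \<le> 2 * Y" unfolding Y_def by presburger
  have km: "card Kept + card (Bad - Kept) = num_bad_blocks n c a" using Kept_Bad card_Bad by simp
  have l: "a * real (card (M \<inter> Aall)) + (b - a) * real_of_int Y \<le> path_cost n c - revenue F p M"
    using loss_bound unfolding Y_def by simp
  show ?thesis by (rule final_arith[OF a0 ab km kept_le Yb l])
qed

end

theorem lemma1:
  fixes n :: nat and c :: "nat \<Rightarrow> real" and a b :: real
    and F :: "nat set set" and p :: "nat set \<Rightarrow> real" and M :: "nat set set"
  assumes "0 \<le> a" and "a < b"
    and "\<forall>i<n. c i \<in> {a, b}"
    and "F \<subseteq> nonpath_pairs n"
    and "\<forall>e\<in>F. 0 \<le> p e"
    and "follower_choice n c F p M"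
  shows "revenue F p M \<le> path_cost n c -
           min (real (num_bad_blocks n c a) * a)
               (real (num_bad_blocks n c a div 2) * (b - a)
                + real (num_bad_blocks n c a - 2 * (num_bad_blocks n c a div 2)) * min a (b - a))"
proof -
  interpret stk n c a b F p M
    by (unfold_locales) (use assms in auto)
  show ?thesis using main by linarith
qed

end
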